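(* Let $k\ge 1$ be an integer with $4\nmid k$ such that $\mathcal{D}:=(k^2+4)/\gcd(2,k)^2$ is squarefree, let $\alpha=\frac{k+\sqrt{k^2+4}}{2}$, and let $p\ge 3$ be a prime. Let $\delta_p$ denote the Legendre symbol $\left(\frac{k^2+4}{p}\right)$. Then (1) $\operatorname{ord}_m(\alpha)=\pi(m)$ for $m\in\{p,p^2\}$; (2) $\alpha^{p-1}\equiv 1 \pmod{p}$ if $\delta_p=1$; (3) $\alpha^{p+1}\equiv -1 \pmod{p}$ if $\delta_p=-1$.
   Context: Let $(U_n)$ be defined by $U_0=0$, $U_1=1$, $U_n=kU_{n-1}+U_{n-2}$ for $n\ge 2$, and let $\pi(m)$ be the length of the period of $(U_n)$ modulo an integer $m\ge 2$. Congruences involving $\alpha$ are taken in the ring of algebraic integers of $\mathbb{Q}(\sqrt{k^2+4})$ (i.e., $x\equiv y \pmod m$ means $(x-y)/m$ is an algebraic integer), and $\operatorname{ord}_m(\alpha)$ denotes the multiplicative order of $\alpha$ modulo $m$ in this sense. *)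

theory Defs
  imports "HOL-Computational_Algebra.Computational_Algebra" "HOL-Number_Theory.Number_Theory"
begin

fun U :: "int \<Rightarrow> nat \<Rightarrow> int" where
  "U k 0 = 0"
| "U k (Suc 0) = 1"
| "U k (Suc (Suc n)) = k * U k (Suc n) + U k n"

definition period_mod :: "int \<Rightarrow> int \<Rightarrow> nat" where
  "period_mod k m = (LEAST n. n > 0 \<and> (\<forall>i. [U k (i + n) = U k i] (mod m)))"

definition alpha :: "int \<Rightarrow> real" where
  "alpha k = (of_int k + sqrt (of_int (k^2 + 4))) / 2"

definition cong_alg :: "real \<Rightarrow> real \<Rightarrow> int \<Rightarrow> bool" where
  "cong_alg x y m \<longleftrightarrow> algebraic_int ((x - y) / of_int m)"

definition ord_alg :: "int \<Rightarrow> real \<Rightarrow> nat" where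
  "ord_alg m x = (LEAST n. n > 0 \<and> cong_alg (x ^ n) 1 m)"

end

theory Submission
  imports Defs
begin


lemma mpa: "map_poly (of_int::int\<Rightarrow>real) (p+q) = map_poly of_int p + map_poly of_int q"
  by (rule poly_eqI) (simp add: coeff_map_poly)
lemma pa: "poly (map_poly (of_int::int\<Rightarrow>real) (p+q)) x = poly (map_poly of_int p) x + poly (map_poly of_int q) x"
  by (simp add: mpa)
lemma pm: "poly (map_poly (of_int::int\<Rightarrow>real) (p*q)) x = poly (map_poly of_int p) x * poly (map_poly of_int q) x"
  by (induction p) (auto simp: map_poly_pCons algebra_simps map_poly_smult pa)

lemma s_sq: "sqrt (real_of_int (k^2+4)) ^ 2 = real_of_int (k^2+4)"
  by (simp add: add_nonneg_nonneg)

lemma s_irrat: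
  fixes k :: int assumes "k \<ge> 1"
  shows "sqrt (real_of_int (k^2+4)) \<notin> \<rat>"
proof
  let ?s = "sqrt (real_of_int (k^2+4))"
  assume "?s \<in> \<rat>"
  moreover have "algebraic_int ?s" by (intro algebraic_int_sqrt algebraic_int_of_int)
  ultimately have "?s \<in> \<int>" using rational_algebraic_int_is_int by blast
  then obtain z where z: "?s = of_int z" by (auto elim: Ints_cases)
  have "z \<ge> 0" using z by (metis of_int_0_le_iff real_sqrt_ge_zero add_nonneg_nonneg zero_le_power2 of_int_nonneg zero_le_numeral)
  have "real_of_int (z^2) = real_of_int (k^2+4)" using s_sq[of k] unfolding z by simp
  hence zz: "z^2 = k^2 + 4" by (simp only: of_int_eq_iff)
  have "k < z"
  proof (rule ccontr)
    assume "\<not> k < z" hence "z \<le> k" by simp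
    hence "z^2 \<le> k^2" using \<open>z \<ge> 0\<close> by (simp add: power_mono)
    thus False using zz by simp
  qed
  hence "k + 1 \<le> z" by simp
  hence "(k+1)^2 \<le> z^2" using assms by (intro power_mono) auto
  hence "k \<le> 1" using zz by (simp add: power2_eq_square algebra_simps)
  hence k1: "k = 1" using assms by simp
  hence "z \<ge> 2" using \<open>k+1 \<le> z\<close> by simp
  moreover have "z < 3"
  proof (rule ccontr)
    assume "\<not> z < 3" hence "3 \<le> z" by simp
    hence "3^2 \<le> z^2" by (intro power_mono) auto
    thus False using zz k1 by simp
  qed
  ultimately have "z = 2" by simp
  thus False using zz k1 by simp
qed

lemma alpha_sq: "alpha k ^ 2 = of_int k * alpha k + 1"
proof -
  have "sqrt (real_of_int (k^2+4)) ^ 2 = of_int k ^ 2 + 4" using s_sq[of k] by simp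
  thus ?thesis unfolding alpha_def by (simp add: power2_eq_square field_simps)
qed

lemma alpha_pow: "alpha k ^ Suc n = of_int (U k (Suc n)) * alpha k + of_int (U k n)"
proof (induction n)
  case 0 thus ?case by simp
next
  case (Suc n)
  have "alpha k ^ Suc (Suc n) = alpha k * (of_int (U k (Suc n)) * alpha k + of_int (U k n))"
    using Suc by simp
  also have "\<dots> = of_int (U k (Suc n)) * alpha k ^ 2 + of_int (U k n) * alpha k"
    by (simp add: algebra_simps power2_eq_square)
  also have "\<dots> = of_int (U k (Suc (Suc n))) * alpha k + of_int (U k (Suc n))"
    by (simp add: alpha_sq algebra_simps)
  finally show ?case .
qed

lemma irr_eq:
  fixes a b c d :: int and s :: real
  assumes "s \<notin> \<rat>" "of_int a + of_int b * s = of_int c + of_int d * s"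
  shows "a = c \<and> b = d"
proof (cases "b = d")
  case True thus ?thesis using assms(2) by simp
next
  case False
  hence "s = of_int (c - a) / of_int (b - d)" using assms(2)
    by (simp add: field_simps)
  hence "s \<in> \<rat>" by simp
  thus ?thesis using assms(1) by simp
qed

lemma alg_int_lin: "algebraic_int (of_int c * alpha k + of_int d)"
proof -
  define P :: "int poly" where "P = [: d^2 + d*c*k - c^2, -(2*d + c*k), 1:]"
  have "poly (map_poly of_int P) (of_int c * alpha k + of_int d) =
     (of_int c)^2 * (alpha k ^ 2 - of_int k * alpha k - 1)"
    by (simp add: P_def map_poly_pCons algebra_simps power2_eq_square)
  also have "\<dots> = 0" by (simp add: alpha_sq)
  finally show ?thesis unfolding algebraic_int_altdef_ipoly
    by (intro exI[of _ P]) (simp add: P_def)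
qed

lemma L7:
  fixes a b m :: int
  assumes "m dvd a" "m dvd b" "m \<noteq> 0"
  shows "algebraic_int ((of_int a + of_int b * alpha k) / of_int m)"
proof -
  obtain c d where "a = m * d" "b = m * c" using assms by (auto elim!: dvdE)
  hence "(of_int a + of_int b * alpha k) / of_int m = of_int c * alpha k + of_int d"
    using assms(3) by (simp add: field_simps)
  thus ?thesis using alg_int_lin by simp
qed



lemma smult_eval: "poly (map_poly (of_int::int\<Rightarrow>real) (Polynomial.smult c p)) x = of_int c * poly (map_poly of_int p) x"
  by (simp add: map_poly_smult)

lemma deg1_eq: "degree (R::int poly) < 2 \<Longrightarrow> R = [:Polynomial.coeff R 0, Polynomial.coeff R 1:]"
  by (rule poly_eqI) (auto simp: coeff_pCons coeff_eq_0 split: nat.splits)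

lemma L8:
  fixes a b m k :: int
  assumes k: "k \<ge> 1" and m: "m > 0"
    and alg: "algebraic_int ((of_int a + of_int b * alpha k) / of_int m)"
  shows "m dvd 2*a + b*k \<and> m^2 dvd a^2 + a*b*k - b^2"
proof (cases "b = 0")
  case True
  hence "(of_int a + of_int b * alpha k) / of_int m = of_int a / (of_int m :: real)" by simp
  also have "\<dots> \<in> \<rat>" by simp
  finally have "(of_int a + of_int b * alpha k) / of_int m \<in> \<int>"
    using alg rational_algebraic_int_is_int by blast
  then obtain z where "(of_int a + of_int b * alpha k) / of_int m = (of_int z :: real)"
    by (auto elim: Ints_cases)
  hence "real_of_int a = of_int (z * m)" using True m by (simp add: field_simps)
  hence "a = z * m" by (simp only: of_int_eq_iff)
  thus ?thesis using True by (simp add: power2_eq_square)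
next
  case False
  define x where "x = (of_int a + of_int b * alpha k) / (of_int m :: real)"
  define s where "s = sqrt (real_of_int (k^2+4))"
  have xm: "x * of_int m = of_int a + of_int b * alpha k" using m by (simp add: x_def)
  have xnq: "x \<notin> \<rat>"
  proof
    assume "x \<in> \<rat>"
    have "s = (2 * of_int m * x - 2 * of_int a - of_int b * of_int k) / of_int b"
      using xm False unfolding alpha_def s_def by (simp add: field_simps)
    also have "\<dots> \<in> \<rat>" using \<open>x \<in> \<rat>\<close> by (intro Rats_divide Rats_diff Rats_mult) auto
    finally show False using s_irrat[OF k] s_def by simp
  qed
  from alg obtain P where P: "poly (map_poly of_int P) x = 0" "lead_coeff P = 1"
    unfolding algebraic_int_altdef_ipoly x_def by blast
  define N where "N = a^2 + a*b*k - b^2"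
  define q1 :: "int poly" where "q1 = [: N, -((2*a + b*k)*m), m^2:]"
  have q1x: "poly (map_poly of_int q1) x = 0"
  proof -
    have "poly (map_poly of_int q1) x = (x * of_int m)^2 - of_int (2*a+b*k) * (x * of_int m) + of_int N"
      by (simp add: q1_def map_poly_pCons algebra_simps power2_eq_square)
    also have "\<dots> = (of_int b)^2 * (alpha k ^ 2 - of_int k * alpha k - 1)"
      unfolding xm N_def by (simp add: algebra_simps power2_eq_square)
    also have "\<dots> = 0" by (simp add: alpha_sq)
    finally show ?thesis .
  qed
  have q1nz: "q1 \<noteq> 0" and dq1: "degree q1 = 2" and lq1: "lead_coeff q1 = m^2"
    using m by (auto simp: q1_def)
  obtain Q R where QR: "pseudo_divmod P q1 = (Q, R)" by (metis surj_pair)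
  define M where "M = (m^2) ^ (Suc (degree P) - 2)"
  have eq: "Polynomial.smult M P = q1 * Q + R" and degR: "R = 0 \<or> degree R < 2"
    using pseudo_divmod[OF q1nz QR] dq1 lq1 by (simp_all add: M_def)
  have R0: "R = 0"
  proof -
    have "degree R < 2" using degR by auto
    hence Req: "R = [:Polynomial.coeff R 0, Polynomial.coeff R 1:]" by (rule deg1_eq)
    have "poly (map_poly of_int R) x = 0"
    proof -
      have "poly (map_poly of_int (Polynomial.smult M P)) x = poly (map_poly of_int (q1 * Q + R)) x"
        using eq by simp
      thus ?thesis using P q1x by (simp add: smult_eval pa pm)
    qed
    hence ev: "real_of_int (Polynomial.coeff R 0) + x * real_of_int (Polynomial.coeff R 1) = 0"
      by (subst (asm) Req) (simp add: map_poly_pCons)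
    have c1: "Polynomial.coeff R 1 = 0"
    proof (rule ccontr)
      assume nz: "Polynomial.coeff R 1 \<noteq> 0"
      hence "x = - of_int (Polynomial.coeff R 0) / of_int (Polynomial.coeff R 1)" using ev by (simp add: field_simps)
      hence "x \<in> \<rat>" by simp
      thus False using xnq by simp
    qed
    hence "Polynomial.coeff R 0 = 0" using ev by simp
    thus ?thesis using c1 by (subst Req) simp
  qed
  hence eq2: "Polynomial.smult M P = q1 * Q" using eq by simp
  have Mpos: "M > 0" using m by (simp add: M_def)
  have Pnz: "P \<noteq> 0" using P by auto
  have Qnz: "Q \<noteq> 0" using eq2 Mpos Pnz by auto
  have cont: "M * content P = content q1 * content Q"
    using arg_cong[OF eq2, of content] Mpos by (simp add: content_mult)
  have lead: "M = m^2 * lead_coeff Q"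
    using arg_cong[OF eq2, of lead_coeff] P Mpos by (simp add: lead_coeff_mult lq1)
  obtain t where t: "lead_coeff Q = content Q * t" using content_dvd_coeff[of Q "degree Q"] unfolding dvd_def by blast
  have cQnz: "content Q \<noteq> 0" using Qnz by simp
  have "content q1 * content Q = (m^2 * t * content P) * content Q"
    using cont lead t by (auto simp: algebra_simps)
  hence "content q1 = m^2 * t * content P" using cQnz by simp
  hence md: "m^2 dvd content q1" by simp
  have "m^2 dvd N" using dvd_trans[OF md content_dvd_coeff[of q1 0]] by (simp add: q1_def)
  moreover have "m^2 dvd -((2*a + b*k)*m)" using dvd_trans[OF md content_dvd_coeff[of q1 1]] by (simp add: q1_def)
  hence "m * m dvd (2*a + b*k) * m" by (simp add: power2_eq_square)
  hence "m dvd 2*a + b*k" using m by (simp add: mult.commute)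
  ultimately show ?thesis by (simp add: N_def)
qed



lemma sqf_key:
  fixes q c D :: int
  assumes "prime q" "squarefree D" "q^2 dvd c^2 * D"
  shows "q dvd c"
proof (rule ccontr)
  assume "\<not> q dvd c"
  hence "coprime q c" using assms(1) by (simp add: prime_imp_coprime)
  hence "coprime (q^2) (c^2)" by simp
  hence "q^2 dvd D" using assms(3) by (simp add: coprime_dvd_mult_right_iff)
  hence "q dvd 1" using assms(2) by (rule squarefreeD[rotated])
  thus False using assms(1) not_prime_unit by blast
qed

lemma L9:
  fixes k a b :: int and p :: nat and e :: nat
  assumes p: "prime p" "p \<ge> 3" and sq: "squarefree ((k^2 + 4) div (gcd 2 k)^2)"
    and e: "e = 1 \<or> e = 2"
    and d1: "int p ^ e dvd 2*a + b*k" and d2: "(int p ^ e)^2 dvd a^2 + a*b*k - b^2"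
  shows "int p ^ e dvd a \<and> int p ^ e dvd b"
proof -
  define g where "g = gcd 2 k"
  define D where "D = (k^2 + 4) div g^2"
  have pr: "prime (int p)" using p by simp
  have gd2: "g dvd 2" and gdk: "g dvd k" by (simp_all add: g_def)
  have "g*g dvd 2*2" using mult_dvd_mono[OF gd2 gd2] .
  moreover have "g*g dvd k*k" using mult_dvd_mono[OF gdk gdk] .
  ultimately have "g^2 dvd k^2 + 4" by (simp add: power2_eq_square)
  hence kD: "k^2 + 4 = g^2 * D" unfolding D_def by (rule dvd_mult_div_cancel[symmetric])
  have sqD: "squarefree D" using sq by (simp only: D_def g_def)
  have cop2: "coprime (int p) 2"
  proof (rule prime_imp_coprime[OF pr])
    show "\<not> int p dvd 2"
    proof
      assume "int p dvd 2" hence "int p \<le> 2" by (rule zdvd_imp_le) simp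
      thus False using p by simp
    qed
  qed
  have copg: "coprime (int p) g" using coprime_divisors[OF dvd_refl gd2 cop2] .
  define m where "m = int p ^ e"
  have iden: "b^2 * (k^2+4) = (2*a+b*k)^2 - 4*(a^2 + a*b*k - b^2)"
    by (simp add: algebra_simps power2_eq_square)
  have "m^2 dvd (2*a+b*k)^2" using d1 unfolding m_def by (rule dvd_power_same)
  moreover have "m^2 dvd 4*(a^2 + a*b*k - b^2)" using d2 unfolding m_def by (rule dvd_mult)
  ultimately have "m^2 dvd b^2 * (k^2+4)" unfolding iden by (rule dvd_diff)
  moreover have "b^2 * (k^2+4) = (b*g)^2 * D" unfolding kD by (simp add: power_mult_distrib)
  ultimately have mB: "m^2 dvd (b*g)^2 * D" by simp
  have mb: "m dvd b"
  proof (cases "e = 1")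
    case True
    hence "(int p)^2 dvd (b*g)^2 * D" using mB by (simp add: m_def)
    hence "int p dvd b * g" using sqf_key[OF pr sqD] by blast
    hence "int p dvd b" using copg by (simp add: coprime_dvd_mult_left_iff)
    thus ?thesis using True by (simp add: m_def)
  next
    case False
    hence e2: "e = 2" using e by simp
    have m2: "m^2 = (int p)^2 * (int p)^2" using e2 by (simp add: m_def power2_eq_square)
    have "(int p)^2 dvd m^2" unfolding m2 by (rule dvd_triv_left)
    hence "(int p)^2 dvd (b*g)^2 * D" using mB dvd_trans by blast
    hence "int p dvd b * g" using sqf_key[OF pr sqD] by blast
    then obtain c where c: "b * g = int p * c" by (auto elim: dvdE)
    have e1: "(b*g)^2 * D = (int p)^2 * (c^2 * D)" unfolding c by (simp add: power_mult_distrib)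
    have "(int p)^2 * (int p)^2 dvd (int p)^2 * (c^2 * D)" using mB unfolding m2 e1 .
    hence "(int p)^2 dvd c^2 * D" using p by (subst (asm) dvd_mult_cancel_left) auto
    hence "int p dvd c" using sqf_key[OF pr sqD] by blast
    hence "(int p)^2 dvd b * g" unfolding c by (simp add: power2_eq_square)
    moreover have "coprime ((int p)^2) g" using copg by simp
    ultimately have "(int p)^2 dvd b" by (simp add: coprime_dvd_mult_left_iff)
    thus ?thesis using e2 by (simp add: m_def)
  qed
  have "m dvd b * k" using mb by simp
  moreover have "2 * a = (2*a + b*k) - b*k" by simp
  ultimately have "m dvd 2 * a" using d1 unfolding m_def[symmetric]
    by (metis dvd_diff)
  moreover have "coprime m 2" using cop2 by (simp add: m_def)
  ultimately have "m dvd a" by (simp add: coprime_dvd_mult_right_iff)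
  thus ?thesis using mb by (simp add: m_def)
qed

lemma L10:
  fixes m k :: int and n :: nat
  assumes "n > 0"
  shows "(\<forall>i. [U k (i + n) = U k i] (mod m)) \<longleftrightarrow> (m dvd U k n \<and> m dvd U k (n - 1) - 1)"
proof -
  obtain n' where n': "n = Suc n'" using assms by (cases n) auto
  have rec: "U k (Suc n) = k * U k n + U k n'" by (simp add: n')
  show ?thesis
  proof
    assume H: "\<forall>i. [U k (i + n) = U k i] (mod m)"
    have "[U k n = 0] (mod m)" using H[rule_format, of 0] by simp
    hence d0: "m dvd U k n" by (simp add: cong_0_iff)
    have "[U k (Suc n) = 1] (mod m)" using H[rule_format, of 1] by simp
    hence "m dvd U k (Suc n) - 1" by (simp add: cong_iff_dvd_diff cong_sym_eq)
    hence "m dvd (U k (Suc n) - 1) - k * U k n" using d0 by (simp add: dvd_diff)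
    hence "m dvd U k n' - 1" using rec by (simp add: algebra_simps)
    thus "m dvd U k n \<and> m dvd U k (n - 1) - 1" using d0 n' by simp
  next
    assume H: "m dvd U k n \<and> m dvd U k (n - 1) - 1"
    have c0: "[U k (0 + n) = U k 0] (mod m)" using H by (simp add: cong_0_iff)
    have "m dvd k * U k n + (U k n' - 1)" using H n' by simp
    hence c1: "[U k (1 + n) = U k 1] (mod m)" using rec by (simp add: cong_iff_dvd_diff algebra_simps)
    have "[U k (i + n) = U k i] (mod m) \<and> [U k (Suc i + n) = U k (Suc i)] (mod m)" for i
    proof (induction i)
      case 0 thus ?case using c0 c1 by simp
    next
      case (Suc i)
      have "[k * U k (Suc i + n) + U k (i + n) = k * U k (Suc i) + U k i] (mod m)"
        using Suc by (intro cong_add cong_mult) auto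
      thus ?case using Suc by simp
    qed
    thus "\<forall>i. [U k (i + n) = U k i] (mod m)" by blast
  qed
qed




lemma sum_form:
  fixes f :: "nat \<Rightarrow> real" and c s :: real
  assumes "finite J" "\<forall>j\<in>J. \<exists>X Y::int. f j = c * (of_int X + of_int Y * s)"
  shows "\<exists>X Y::int. sum f J = c * (of_int X + of_int Y * s)"
  using assms
proof (induction J rule: finite_induct)
  case empty
  show ?case by (intro exI[of _ 0]) simp
next
  case (insert j J)
  then obtain X1 Y1 where 1: "f j = c * (of_int X1 + of_int Y1 * s)" by auto
  from insert obtain X2 Y2 where 2: "sum f J = c * (of_int X2 + of_int Y2 * s)" by auto
  show ?case using insert 1 2
    by (intro exI[of _ "X1 + X2"] exI[of _ "Y1 + Y2"]) (simp add: algebra_simps)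
qed

lemma spow:
  fixes s :: real
  assumes ss: "s^2 = of_int D0"
  shows "s^j = of_int (D0^(j div 2)) * s^(j mod 2)"
proof -
  have "s^(2*(j div 2) + j mod 2) = (s^2)^(j div 2) * s^(j mod 2)" by (simp only: power_add power_mult)
  moreover have "2*(j div 2) + j mod 2 = j" by simp
  ultimately show ?thesis using ss by simp
qed

lemma BL:
  fixes k :: int and p :: nat and s :: real
  assumes pr: "prime p" and od: "odd p" and ss: "s^2 = of_int (k^2+4)"
  shows "\<exists>X Y::int. (of_int k + s)^p = of_int (k^p) + of_int ((k^2+4)^((p-1) div 2)) * s
            + of_nat p * (of_int X + of_int Y * s)"
proof -
  define f where "f j = of_nat (p choose j) * s^j * of_int k^(p-j)" for j
  have p0: "p > 0" using pr prime_gt_0_nat by blast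
  have bin: "(of_int k + s)^p = (\<Sum>j\<le>p. f j)" unfolding f_def
    by (subst add.commute) (rule binomial_ring)
  have set: "{..p} = insert 0 (insert p {1..<p})" using p0 by auto
  have "(\<Sum>j\<le>p. f j) = f 0 + (f p + sum f {1..<p})"
    unfolding set using p0 by (subst sum.insert; simp)+
  moreover have "f 0 = of_int (k^p)" by (simp add: f_def)
  moreover have "f p = of_int ((k^2+4)^((p-1) div 2)) * s"
  proof -
    have "f p = s^p" by (simp add: f_def)
    also have "\<dots> = of_int ((k^2+4)^(p div 2)) * s^(p mod 2)" by (rule spow[OF ss])
    also have "p mod 2 = 1" using od by (simp add: odd_iff_mod_2_eq_one)
    also have "p div 2 = (p-1) div 2" using od by (auto elim: oddE)
    finally show ?thesis by simp
  qed
  moreover have "\<exists>X Y::int. sum f {1..<p} = of_nat p * (of_int X + of_int Y * s)"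
  proof (rule sum_form)
    show "\<forall>j\<in>{1..<p}. \<exists>X Y::int. f j = of_nat p * (of_int X + of_int Y * s)"
    proof
      fix j assume j: "j \<in> {1..<p}"
      have "p dvd (p choose j)" using j p0 pr by (intro dvd_choose_prime) auto
      then obtain c where c: "p choose j = p * c" by (auto elim: dvdE)
      define Z where "Z = int c * (k^2+4)^(j div 2) * k^(p-j)"
      have fj: "f j = of_nat p * (of_int Z * s^(j mod 2))"
        unfolding f_def c Z_def by (subst spow[OF ss]) (simp add: algebra_simps)
      show "\<exists>X Y::int. f j = of_nat p * (of_int X + of_int Y * s)"
      proof (cases "j mod 2 = 0")
        case True thus ?thesis using fj by (intro exI[of _ Z] exI[of _ 0]) simp
      next
        case False hence "j mod 2 = 1" by simp
        thus ?thesis using fj by (intro exI[of _ 0] exI[of _ Z]) simp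
      qed
    qed
  qed simp
  ultimately show ?thesis using bin by (auto simp: algebra_simps)
qed



lemma part1:
  fixes k :: int and p :: nat and m :: int
  assumes k: "k \<ge> 1" and sq: "squarefree ((k^2 + 4) div (gcd 2 k)^2)"
    and p: "prime p" "p \<ge> 3" and e: "e = 1 \<or> e = 2" and me: "m = int p ^ e"
  shows "ord_alg m (alpha k) = period_mod k m"
proof -
  have mpos: "m > 0" using me p by (simp add: prime_gt_0_nat)
  have eqv: "(n > 0 \<and> cong_alg (alpha k ^ n) 1 m) = (n > 0 \<and> (\<forall>i. [U k (i + n) = U k i] (mod m)))" for n
  proof (cases n)
    case 0 thus ?thesis by simp
  next
    case (Suc n')
    have am: "alpha k ^ n - 1 = of_int (U k n' - 1) + of_int (U k n) * alpha k"
      using alpha_pow[of k n'] Suc by simp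
    hence ca: "cong_alg (alpha k ^ n) 1 m = algebraic_int ((of_int (U k n' - 1) + of_int (U k n) * alpha k) / of_int m)"
      unfolding cong_alg_def am by simp
    have "cong_alg (alpha k ^ n) 1 m \<longleftrightarrow> (m dvd U k n \<and> m dvd U k n' - 1)"
    proof
      assume "cong_alg (alpha k ^ n) 1 m"
      hence "algebraic_int ((of_int (U k n' - 1) + of_int (U k n) * alpha k) / of_int m)" using ca by simp
      from L8[OF k mpos this] have "m dvd 2 * (U k n' - 1) + U k n * k"
        "m^2 dvd (U k n' - 1)^2 + (U k n' - 1) * U k n * k - (U k n)^2" by auto
      from L9[OF p sq e this[unfolded me]] show "m dvd U k n \<and> m dvd U k n' - 1" using me by simp
    next
      assume "m dvd U k n \<and> m dvd U k n' - 1"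
      thus "cong_alg (alpha k ^ n) 1 m" using ca L7[of m "U k n' - 1" "U k n" k] mpos by simp
    qed
    moreover have "(\<forall>i. [U k (i + n) = U k i] (mod m)) \<longleftrightarrow> (m dvd U k n \<and> m dvd U k n' - 1)"
      using L10[of n k m] Suc by simp
    ultimately show ?thesis by simp
  qed
  show ?thesis unfolding ord_alg_def period_mod_def eqv ..
qed

lemma fermat_int:
  fixes k :: int and p :: nat
  assumes p: "prime p" and k: "k \<ge> 1"
  shows "int p dvd k^p - k"
proof (cases "int p dvd k")
  case True
  have "p > 0" using p prime_gt_0_nat by blast
  hence "k^p = k * k^(p-1)" by (cases p) auto
  thus ?thesis using True by simp
next
  case False
  define kn where "kn = nat k"
  have kk: "k = int kn" using k by (simp add: kn_def)
  have "\<not> p dvd kn" using False kk by simp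
  hence "[kn^(p-1) = 1] (mod p)" using fermat_theorem[OF p] by blast
  hence "[int kn^(p-1) = int 1] (mod int p)" by (metis cong_int_iff of_nat_power)
  hence "int p dvd k^(p-1) - 1" using kk by (simp add: cong_iff_dvd_diff)
  hence "int p dvd k * (k^(p-1) - 1)" by simp
  moreover have "p > 0" using p prime_gt_0_nat by blast
  hence "k^p = k * k^(p-1)" by (cases p) auto
  ultimately show ?thesis by (simp add: algebra_simps)
qed


lemma part23:
  fixes k :: int and p :: nat
  assumes k: "k \<ge> 1" and p: "prime p" "p \<ge> 3"
  shows "(Legendre (k^2 + 4) (int p) = 1 \<longrightarrow> cong_alg (alpha k ^ (p - 1)) 1 (int p))
    \<and> (Legendre (k^2 + 4) (int p) = -1 \<longrightarrow> cong_alg (alpha k ^ (p + 1)) (-1) (int p))"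
proof -
  define s where "s = sqrt (real_of_int (k^2+4))"
  define D0 where "D0 = k^2 + 4"
  define h where "h = (p - 1) div 2"
  define \<delta> where "\<delta> = Legendre (k^2 + 4) (int p)"
  have pp: "int p > 0" using p by simp
  have od: "odd p" using p prime_odd_nat by auto
  have ss: "s^2 = of_int (k^2+4)" unfolding s_def by (rule s_sq)
  have sirr: "s \<notin> \<rat>" unfolding s_def by (rule s_irrat[OF k])
  obtain X Y :: int where XY: "(of_int k + s)^p = of_int (k^p) + of_int (D0^h) * s
            + of_nat p * (of_int X + of_int Y * s)"
    using BL[OF p(1) od ss] unfolding D0_def h_def by blast
  have p1: "p = Suc (p - 1)" using p by simp
  have ak: "of_int k + s = 2 * alpha k" by (simp add: alpha_def s_def)
  have "(of_int k + s)^p = 2^p * alpha k ^ p" unfolding ak by (simp add: power_mult_distrib)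
  also have "alpha k ^ p = of_int (U k p) * alpha k + of_int (U k (p-1))"
    using alpha_pow[of k "p-1"] p1 by simp
  also have "(2::real)^p = 2 * 2^(p-1)" using p1 by (metis power_Suc)
  finally have "(of_int k + s)^p = 2 * 2^(p-1) * (of_int (U k p) * alpha k + of_int (U k (p-1)))" .
  also have "\<dots> = of_int (2^(p-1) * k * U k p + 2 * 2^(p-1) * U k (p-1)) + of_int (2^(p-1) * U k p) * s"
    unfolding alpha_def s_def[symmetric] by (simp add: field_simps)
  finally have "of_int (2^(p-1) * k * U k p + 2 * 2^(p-1) * U k (p-1)) + of_int (2^(p-1) * U k p) * s
      = of_int (k^p + int p * X) + of_int (D0^h + int p * Y) * s"
    using XY by (simp add: algebra_simps)
  from irr_eq[OF sirr this] have
    E1: "2^(p-1) * k * U k p + 2 * 2^(p-1) * U k (p-1) = k^p + int p * X" and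
    E2: "2^(p-1) * U k p = D0^h + int p * Y" by auto
  have "\<not> p dvd 2" using p by (metis dvd_imp_le not_numeral_le_zero numeral_le_iff semiring_norm(69) zero_less_numeral le_antisym nat_le_linear numeral_One one_le_numeral order.trans Suc_n_not_le_n numeral_2_eq_2 numeral_3_eq_3 eval_nat_numeral(3))
  hence "[(2::nat)^(p-1) = 1] (mod p)" using fermat_theorem[OF p(1)] by blast
  hence F2: "int p dvd 2^(p-1) - 1"
    by (metis cong_int_iff cong_iff_dvd_diff of_nat_1 of_nat_numeral of_nat_power)
  have Fk: "int p dvd k^p - k" by (rule fermat_int[OF p(1) k])
  have "[Legendre D0 (int p) = D0 ^ ((p - 1) div 2)] (mod int p)"
    using euler_criterion[OF p(1)] p by simp
  hence Eu: "int p dvd D0^h - \<delta>" unfolding h_def \<delta>_def D0_def by (simp add: cong_iff_dvd_diff dvd_diff_commute)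
  have "U k p - \<delta> = (2^(p-1) * U k p - D0^h) - (2^(p-1) - 1) * U k p + (D0^h - \<delta>)" by (simp add: algebra_simps)
  also have "int p dvd \<dots>"
  proof -
    have a1: "int p dvd 2^(p-1) * U k p - D0^h" using E2 by simp
    have a2: "int p dvd (2^(p-1) - 1) * U k p" using F2 by (rule dvd_mult2)
    show ?thesis by (rule dvd_add[OF dvd_diff[OF a1 a2] Eu])
  qed
  finally have G1: "int p dvd U k p - \<delta>" .
  have "k * U k p + 2 * U k (p-1) - k = (2^(p-1) * k * U k p + 2 * 2^(p-1) * U k (p-1) - k^p)
        - (2^(p-1) - 1) * (k * U k p + 2 * U k (p-1)) + (k^p - k)" by (simp add: algebra_simps)
  also have "int p dvd \<dots>"
  proof -
    have a1: "int p dvd 2^(p-1) * k * U k p + 2 * 2^(p-1) * U k (p-1) - k^p" using E1 by simp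
    have a2: "int p dvd (2^(p-1) - 1) * (k * U k p + 2 * U k (p-1))" using F2 by (rule dvd_mult2)
    show ?thesis by (rule dvd_add[OF dvd_diff[OF a1 a2] Fk])
  qed
  finally have G2: "int p dvd k * U k p + 2 * U k (p-1) - k" .
  have cop2: "coprime (int p) 2"
  proof (rule prime_imp_coprime)
    show "prime (int p)" using p by simp
    show "\<not> int p dvd 2"
    proof
      assume "int p dvd 2" hence "int p \<le> 2" by (rule zdvd_imp_le) simp
      thus False using p by simp
    qed
  qed
  show ?thesis
  proof (intro conjI impI)
    assume d: "Legendre (k^2 + 4) (int p) = 1"
    hence G1': "int p dvd U k p - 1" using G1 by (simp add: \<delta>_def)
    have "2 * U k (p-1) = (k * U k p + 2 * U k (p-1) - k) - k * (U k p - 1)" by (simp add: algebra_simps)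
    also have "int p dvd \<dots>" using G1' G2 by (rule dvd_diff[OF _ dvd_mult, rotated])
    finally have "int p dvd U k (p-1)" using cop2 by (simp add: coprime_dvd_mult_right_iff)
    moreover have p2: "p = Suc (Suc (p-2))" using p by simp
    have p3: "Suc (p-2) = p-1" using p by simp
    have "U k (Suc (Suc (p-2))) = k * U k (Suc (p-2)) + U k (p-2)" by simp
    hence "U k p = k * U k (p-1) + U k (p-2)" unfolding p2[symmetric] p3 using p1 by metis
    hence "U k (p-2) - 1 = (U k p - 1) - k * U k (p-1)" by simp
    ultimately have G5: "int p dvd U k (p-2) - 1" using G1' by (metis dvd_diff dvd_mult)
    have am1: "alpha k ^ (p-1) - 1 = of_int (U k (p-2) - 1) + of_int (U k (p-1)) * alpha k"
      using alpha_pow[of k "p-2"] unfolding p3 by simp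
    show "cong_alg (alpha k ^ (p - 1)) 1 (int p)"
      unfolding cong_alg_def am1 by (rule L7) (use G5 \<open>int p dvd U k (p-1)\<close> pp in auto)
  next
    assume d: "Legendre (k^2 + 4) (int p) = -1"
    hence G1': "int p dvd U k p + 1" using G1 by (simp add: \<delta>_def)
    have "2 * (U k (p-1) - k) = (k * U k p + 2 * U k (p-1) - k) - k * (U k p + 1)" by (simp add: algebra_simps)
    also have "int p dvd \<dots>" using G1' G2 by (rule dvd_diff[OF _ dvd_mult, rotated])
    finally have "int p dvd 2 * (U k (p-1) - k)" .
    hence G3: "int p dvd U k (p-1) - k" using cop2 coprime_dvd_mult_right_iff by blast
    have "U k (p+1) = k * U k p + U k (p-1)" using p1 by (metis Suc_eq_plus1 U.simps(3))
    hence "U k (p+1) = k * (U k p + 1) + (U k (p-1) - k)" by (simp add: algebra_simps)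
    hence G4: "int p dvd U k (p+1)" using G1' G3 by (metis dvd_add dvd_mult)
    have am2: "alpha k ^ (p+1) - (-1) = of_int (U k p + 1) + of_int (U k (p+1)) * alpha k"
      using alpha_pow[of k p] by (simp add: algebra_simps)
    show "cong_alg (alpha k ^ (p + 1)) (-1) (int p)"
      unfolding cong_alg_def am2 by (rule L7) (use G1' G4 pp in auto)
  qed
qed


theorem lemma3p2:
  fixes k :: int and p :: nat
  assumes "k \<ge> 1"
    and "\<not> (4 dvd k)"
    and "squarefree ((k^2 + 4) div (gcd 2 k)^2)"
    and "prime p" and "p \<ge> 3"
  shows "(\<forall>m \<in> {int p, int p ^ 2}. ord_alg m (alpha k) = period_mod k m)
    \<and> (Legendre (k^2 + 4) (int p) = 1 \<longrightarrow> cong_alg (alpha k ^ (p - 1)) 1 (int p))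
    \<and> (Legendre (k^2 + 4) (int p) = -1 \<longrightarrow> cong_alg (alpha k ^ (p + 1)) (-1) (int p))"
proof -
  have "\<forall>m \<in> {int p, int p ^ 2}. ord_alg m (alpha k) = period_mod k m"
  proof
    fix m assume "m \<in> {int p, int p ^ 2}"
    hence "m = int p ^ 1 \<or> m = int p ^ 2" by auto
    thus "ord_alg m (alpha k) = period_mod k m"
      using part1[OF assms(1) assms(3) assms(4) assms(5)] by blast
  qed
  thus ?thesis using part23[OF assms(1) assms(4) assms(5)] by blast
qed

end
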